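(* Let $p$ be a prime with $p\equiv1\pmod4$, let $K$ be a finite field of characteristic $p$ and order $q$, and let $s$ be a positive integer with $\gcd(s,q-1)=1$. Any $W_u$ ($u\in K$) lying in $\mathbb{Q}(\sqrt p)$ can be written uniquely as $(I+J\sqrt p)/2$ with $I,J\in\mathbb{Z}$; moreover $I\equiv J\pmod2$ and $v_p(I)\ge1$. If $s$ is nondegenerate over $K$, then $-q<-2(q-1)/(p-1)<I<2q$ and $|J|\le 2(q-1)/(p-1)<q$.
   Context: $\zeta=\exp(2\pi i/p)$, $\psi(x)=\zeta^{\mathrm{Tr}(x)}$ with $\mathrm{Tr}$ the absolute trace of $K$ to $\mathbb{F}_p$; $W_u=\sum_{x\in K}\psi(x^s-ux)$. $\sqrt p$ is the positive real square root. $v_p$ is the $p$-adic valuation on $\mathbb{Q}$ (with $v_p(0)=\infty$). The exponent $s$ is degenerate over $K$ if $s\equiv p^k\pmod{q-1}$ for some integer $k$, and nondegenerate otherwise. *)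

theory Defs
  imports "HOL-Analysis.Analysis" "HOL-Number_Theory.Number_Theory"
begin

definition field_degree :: "'a::{finite,field} itself \<Rightarrow> nat" where
  "field_degree _ = (THE n. CARD('a) = CHAR('a) ^ n)"

definition abs_trace :: "'a::{finite,field} \<Rightarrow> 'a" where
  "abs_trace x = (\<Sum>i<field_degree TYPE('a). x ^ (CHAR('a) ^ i))"

definition abs_trace_nat :: "'a::{finite,field} \<Rightarrow> nat" where
  "abs_trace_nat x = (THE k. k < CHAR('a) \<and> of_nat k = abs_trace x)"

definition psi :: "'a::{finite,field} \<Rightarrow> complex" where
  "psi x = exp (2 * of_real pi * \<i> * of_nat (abs_trace_nat x) / of_nat CHAR('a))"

definition weil_sum :: "nat \<Rightarrow> 'a::{finite,field} \<Rightarrow> complex" where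
  "weil_sum s u = (\<Sum>x\<in>UNIV. psi (x ^ s - u * x))"

definition degenerate :: "'a::{finite,field} itself \<Rightarrow> nat \<Rightarrow> bool" where
  "degenerate _ s = (\<exists>k. [s = CHAR('a) ^ k] (mod (CARD('a) - 1)))"

end

theory Submission
  imports Defs "HOL-Computational_Algebra.Polynomial_Factorial" "HOL-Library.Cardinality"
begin

lemma eisenstein_aux:
  fixes F A B :: "int poly" and p :: int
  assumes pr: "prime p" and FAB: "F = A * B"
    and low: "\<And>k. k < degree F \<Longrightarrow> p dvd Polynomial.coeff F k"
    and c0: "\<not> p^2 dvd Polynomial.coeff F 0"
    and lc: "\<not> p dvd lead_coeff F"
  shows "degree A = 0 \<or> degree B = 0"
proof (rule ccontr)
  assume "\<not> (degree A = 0 \<or> degree B = 0)"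
  hence a1: "degree A \<ge> 1" and b1: "degree B \<ge> 1" by auto
  have F0: "F \<noteq> 0" using lc by auto
  hence A0: "A \<noteq> 0" and B0: "B \<noteq> 0" using FAB by auto
  have degF: "degree F = degree A + degree B" using FAB A0 B0 by (simp add: degree_mult_eq)
  have "lead_coeff F = lead_coeff A * lead_coeff B" using FAB by (simp add: lead_coeff_mult)
  hence lA: "\<not> p dvd lead_coeff A" and lB: "\<not> p dvd lead_coeff B" using lc by auto
  define i where "i = (LEAST i. \<not> p dvd Polynomial.coeff A i)"
  define j where "j = (LEAST j. \<not> p dvd Polynomial.coeff B j)"
  have ai: "\<not> p dvd Polynomial.coeff A i" unfolding i_def by (rule LeastI[of _ "degree A"]) (use lA in auto)
  have bj: "\<not> p dvd Polynomial.coeff B j" unfolding j_def by (rule LeastI[of _ "degree B"]) (use lB in auto)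
  have ia: "i \<le> degree A" unfolding i_def by (rule Least_le) (use lA in auto)
  have jb: "j \<le> degree B" unfolding j_def by (rule Least_le) (use lB in auto)
  have ak: "p dvd Polynomial.coeff A k" if "k < i" for k using not_less_Least[OF that[unfolded i_def]] by auto
  have bk: "p dvd Polynomial.coeff B k" if "k < j" for k using not_less_Least[OF that[unfolded j_def]] by auto
  have "Polynomial.coeff F (i+j) = (\<Sum>k\<le>i+j. Polynomial.coeff A k * Polynomial.coeff B (i+j-k))" using FAB coeff_mult by blast
  also have "\<dots> = Polynomial.coeff A i * Polynomial.coeff B j + (\<Sum>k\<in>{..i+j}-{i}. Polynomial.coeff A k * Polynomial.coeff B (i+j-k))"
    by (subst sum.remove[of _ i]) auto
  finally have eq: "Polynomial.coeff F (i+j) = Polynomial.coeff A i * Polynomial.coeff B j + (\<Sum>k\<in>{..i+j}-{i}. Polynomial.coeff A k * Polynomial.coeff B (i+j-k))" .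
  have S: "p dvd (\<Sum>k\<in>{..i+j}-{i}. Polynomial.coeff A k * Polynomial.coeff B (i+j-k))"
  proof (rule dvd_sum)
    fix k assume "k \<in> {..i+j}-{i}"
    hence "k < i \<or> (k > i \<and> i+j-k < j)" by auto
    thus "p dvd Polynomial.coeff A k * Polynomial.coeff B (i+j-k)" using ak bk by auto
  qed
  have "\<not> p dvd Polynomial.coeff A i * Polynomial.coeff B j" using ai bj pr by (simp add: prime_dvd_mult_iff)
  hence "\<not> p dvd Polynomial.coeff F (i+j)" unfolding eq using dvd_add_left_iff[OF S] by simp
  hence "\<not> i + j < degree F" using low by blast
  hence "i = degree A" "j = degree B" using ia jb degF by auto
  hence "p dvd Polynomial.coeff A 0" "p dvd Polynomial.coeff B 0" using ak bk a1 b1 by auto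
  hence "p^2 dvd Polynomial.coeff A 0 * Polynomial.coeff B 0" by (simp add: power2_eq_square mult_dvd_mono)
  moreover have "Polynomial.coeff F 0 = Polynomial.coeff A 0 * Polynomial.coeff B 0" using FAB by (simp add: coeff_mult)
  ultimately show False using c0 by simp
qed


definition cyc :: "nat \<Rightarrow> int poly" where "cyc p = (\<Sum>i<p. Polynomial.monom 1 i)"

lemma coeff_cyc: "Polynomial.coeff (cyc p) k = (if k < p then 1 else 0)"
  unfolding cyc_def by (simp add: coeff_sum)

lemma degree_cyc: assumes "p \<ge> 1" shows "degree (cyc p) = p - 1"
proof (rule antisym)
  show "degree (cyc p) \<le> p - 1" by (rule degree_le) (auto simp: coeff_cyc)
  show "p - 1 \<le> degree (cyc p)" by (rule le_degree) (use assms in \<open>auto simp: coeff_cyc\<close>)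
qed

lemma pcompose_X_power: "pcompose ([:0,1:] ^ i) r = r ^ i"
  by (induction i) (auto simp: pcompose_mult pcompose_pCons pcompose_1)

lemma cyc_times: "cyc p * [:-1, 1:] = [:0,1:] ^ p - 1"
proof -
  have "cyc p = (\<Sum>i<p. [:0,1:] ^ i)" unfolding cyc_def by (simp add: monom_altdef)
  moreover have "[:-1, 1:] = [:0,1:] - (1::int poly)" by (simp add: one_pCons)
  ultimately show ?thesis by (simp add: power_diff_1_eq mult.commute)
qed

lemma coeff_lin_power: "Polynomial.coeff ([:1,1:] ^ n :: int poly) m = int (n choose m)"
proof -
  have "[:1,1:] = [:0,1:] + (1::int poly)" by (simp add: one_pCons)
  hence "([:1,1:] ^ n :: int poly) = (\<Sum>k\<le>n. of_nat (n choose k) * [:0,1:] ^ k * 1 ^ (n - k))"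
    by (simp add: binomial_ring)
  also have "\<dots> = (\<Sum>k\<le>n. Polynomial.monom (of_nat (n choose k)) k)"
    by (intro sum.cong refl) (simp add: monom_altdef of_nat_poly)
  finally show ?thesis by (simp add: coeff_sum coeff_monom)
qed

definition cycs :: "nat \<Rightarrow> int poly" where "cycs p = pcompose (cyc p) [:1,1:]"

lemma cycs_times: "cycs p * [:0,1:] = [:1,1:] ^ p - 1"
proof -
  have "pcompose (cyc p * [:-1, 1:]) [:1,1:] = cycs p * pcompose [:-1, 1:] [:1,1:]"
    unfolding cycs_def by (rule pcompose_mult)
  also have "pcompose [:-1, 1::int:] [:1,1:] = [:0,1:]" by (simp add: pcompose_pCons)
  finally have "cycs p * [:0,1:] = pcompose (cyc p * [:-1, 1:]) [:1,1:]" by simp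
  also have "\<dots> = pcompose ([:0,1:] ^ p - 1) [:1,1:]" by (simp only: cyc_times)
  also have "\<dots> = [:1,1:] ^ p - 1" by (simp only: pcompose_diff pcompose_X_power pcompose_1)
  finally show ?thesis .
qed

lemma coeff_cycs: "Polynomial.coeff (cycs p) k = int (p choose Suc k)"
proof -
  have "pCons 0 (cycs p) = [:1,1:] ^ p - 1" using cycs_times[of p] by simp
  hence "Polynomial.coeff (pCons 0 (cycs p)) (Suc k) = Polynomial.coeff ([:1,1:] ^ p - 1) (Suc k)" by simp
  thus ?thesis by (simp add: coeff_lin_power)
qed

lemma cyc_irred:
  assumes p: "prime p" and AB: "cyc p = A * B"
  shows "degree A = 0 \<or> degree B = 0"
proof -
  have p1: "p \<ge> 2" using p prime_ge_2_nat by blast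
  have dcs: "degree (cycs p) = p - 1"
    using p1 by (simp add: cycs_def degree_pcompose degree_cyc)
  have fac: "cycs p = pcompose A [:1,1:] * pcompose B [:1,1:]"
    unfolding cycs_def AB pcompose_mult ..
  have pr: "prime (int p)" using p by simp
  have low: "int p dvd Polynomial.coeff (cycs p) k" if "k < degree (cycs p)" for k
    using that dcs dvd_choose_prime[of "Suc k" p] p by (auto simp: coeff_cycs)
  have c0: "\<not> (int p)^2 dvd Polynomial.coeff (cycs p) 0"
    using p1 by (simp add: coeff_cycs power2_eq_square)
  have lc: "\<not> int p dvd lead_coeff (cycs p)"
    using p1 by (simp add: dcs coeff_cycs)
  have "degree (pcompose A [:1,1:]) = 0 \<or> degree (pcompose B [:1,1:]) = 0"
    by (rule eisenstein_aux[OF pr fac low c0 lc])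
  thus ?thesis by (simp add: degree_pcompose)
qed


lemma mpi_add: "map_poly (of_int :: int \<Rightarrow> 'a::comm_ring_1) (A + B) = map_poly of_int A + map_poly of_int B"
  by (rule poly_eqI) (simp add: coeff_map_poly)

lemma mpi_smult: "map_poly (of_int :: int \<Rightarrow> 'a::comm_ring_1) (Polynomial.smult a B) = Polynomial.smult (of_int a) (map_poly of_int B)"
  by (rule map_poly_smult) auto

lemma mpi_mult: "map_poly (of_int :: int \<Rightarrow> 'a::comm_ring_1) (A * B) = map_poly of_int A * map_poly of_int B"
proof (induction A)
  case 0 then show ?case by simp
next
  case (pCons a A)
  then show ?case by (simp add: mpi_add mpi_smult map_poly_pCons)
qed

lemma ev_mult: "poly (map_poly (of_int :: int \<Rightarrow> 'a::comm_ring_1) (A * B)) z =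
   poly (map_poly of_int A) z * poly (map_poly of_int B) z"
  by (simp add: mpi_mult)

lemma ev_sum_monom:
  assumes "finite S"
  shows "poly (map_poly (of_int :: int \<Rightarrow> 'a::comm_ring_1) (\<Sum>c\<in>S. Polynomial.monom (f c) c)) z = (\<Sum>c\<in>S. of_int (f c) * z ^ c)"
  using assms
proof (induction S rule: finite_induct)
  case empty then show ?case by simp
next
  case (insert x F)
  then show ?case by (simp add: mpi_add map_poly_monom poly_monom)
qed

lemma cyc_root:
  fixes z :: complex
  assumes "z ^ p = 1" "z \<noteq> 1"
  shows "poly (map_poly of_int (cyc p)) z = 0"
proof -
  have "poly (map_poly of_int (cyc p)) z = (\<Sum>i<p. z ^ i)"
    unfolding cyc_def by (subst ev_sum_monom) auto
  also have "\<dots> = 0"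
  proof -
    have "(z - 1) * (\<Sum>i<p. z ^ i) = z ^ p - 1" by (simp add: power_diff_1_eq)
    hence "(z - 1) * (\<Sum>i<p. z ^ i) = 0" using assms by simp
    thus ?thesis using assms by simp
  qed
  finally show ?thesis .
qed

lemma cyc_LI:
  fixes z :: complex and R :: "int poly"
  assumes p: "prime p" and z: "z ^ p = 1" "z \<noteq> 1"
    and R: "poly (map_poly of_int R) z = 0" and dR: "degree R < p - 1"
  shows "R = 0"
proof (rule ccontr)
  assume R0: "R \<noteq> 0"
  have p1: "p \<ge> 2" using p prime_ge_2_nat by blast
  define P where "P M \<longleftrightarrow> M \<noteq> 0 \<and> poly (map_poly (of_int :: int \<Rightarrow> complex) M) z = 0" for M
  have Pc: "P (cyc p)"
  proof -
    have "Polynomial.coeff (cyc p) 0 \<noteq> 0" using p1 by (simp add: coeff_cyc)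
    hence "cyc p \<noteq> 0" by auto
    thus ?thesis unfolding P_def using cyc_root[OF z] by simp
  qed
  define d where "d = (LEAST d. \<exists>M. P M \<and> degree M = d)"
  obtain M where PM: "P M" and dM: "degree M = d"
    unfolding d_def using LeastI_ex[of "\<lambda>d. \<exists>M. P M \<and> degree M = d"] Pc by blast
  have dmin: "d \<le> degree N" if "P N" for N
    unfolding d_def by (rule Least_le) (use that in auto)
  have M0: "M \<noteq> 0" using PM P_def by auto
  define r where "r = pseudo_mod (cyc p) M"
  obtain a q where aq: "a \<noteq> 0" "Polynomial.smult a (cyc p) = M * q + r"
    using pseudo_mod(1)[OF M0, of "cyc p"] unfolding r_def by blast
  have rd: "r = 0 \<or> degree r < degree M"
    using pseudo_mod(2)[OF M0, of "cyc p"] unfolding r_def by blast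
  have "poly (map_poly (of_int :: int \<Rightarrow> complex) (Polynomial.smult a (cyc p))) z = 0"
    using Pc unfolding P_def by (simp add: mpi_smult)
  hence "poly (map_poly (of_int :: int \<Rightarrow> complex) r) z = 0"
    using PM unfolding P_def aq(2) by (simp add: mpi_add mpi_mult)
  hence r0: "r = 0"
  proof (rule contrapos_pp)
    assume "r \<noteq> 0"
    hence "degree r < degree M" using rd by simp
    moreover have "poly (map_poly (of_int :: int \<Rightarrow> complex) r) z \<noteq> 0"
    proof
      assume "poly (map_poly (of_int :: int \<Rightarrow> complex) r) z = 0"
      hence "P r" using \<open>r \<noteq> 0\<close> unfolding P_def by simp
      hence "d \<le> degree r" by (rule dmin)
      thus False using \<open>degree r < degree M\<close> dM by simp
    qed
    ultimately show "poly (map_poly (of_int :: int \<Rightarrow> complex) r) z \<noteq> 0" by simp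
  qed
  define M' where "M' = primitive_part M"
  have cM': "content M' = 1" unfolding M'_def using M0 by simp
  have "M' dvd Polynomial.smult a (cyc p)"
  proof -
    have "M' dvd M" unfolding M'_def
      by (metis content_times_primitive_part dvd_smult dvd_refl)
    thus ?thesis using aq r0 by simp
  qed
  hence "fract_poly M' dvd fract_poly (Polynomial.smult a (cyc p))" by (rule fract_poly_dvd)
  hence "fract_poly M' dvd Polynomial.smult (to_fract a) (fract_poly (cyc p))" by simp
  hence "fract_poly M' dvd fract_poly (cyc p)"
    using aq(1) by (simp add: dvd_smult_cancel)
  hence "M' dvd cyc p" using fract_poly_dvdD cM' by blast
  then obtain Q where Q: "cyc p = M' * Q" by (elim dvdE)
  have cyc0: "cyc p \<noteq> 0" using Pc P_def by auto
  have "degree M' = 0 \<or> degree Q = 0" by (rule cyc_irred[OF p Q])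
  moreover have "degree M' = degree M" unfolding M'_def by simp
  moreover have "degree (cyc p) = degree M' + degree Q"
    using Q cyc0 by (metis degree_mult_eq mult_eq_0_iff)
  ultimately have "degree M = 0 \<or> degree M = p - 1" using degree_cyc[of p] p1 by auto
  moreover have "degree M \<noteq> 0"
  proof
    assume "degree M = 0"
    then obtain c where "M = [:c:]" by (meson degree_eq_zeroE)
    thus False using PM M0 unfolding P_def by (auto simp: map_poly_pCons)
  qed
  moreover have "d \<le> degree R" using dmin R0 R unfolding P_def by auto
  ultimately show False using dM dR by auto
qed

lemma cyc_LI_sum:
  fixes z :: complex and f :: "nat \<Rightarrow> int"
  assumes p: "prime p" and z: "z ^ p = 1" "z \<noteq> 1"
    and S: "(\<Sum>c<p. of_int (f c) * z ^ c) = 0"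
  shows "\<forall>c<p. f c = f 0"
proof -
  have p1: "p \<ge> 2" using p prime_ge_2_nat by blast
  define R where "R = (\<Sum>c<p. Polynomial.monom (f c - f (p-1)) c)"
  have cR: "Polynomial.coeff R c = (if c < p then f c - f (p-1) else 0)" for c
    unfolding R_def by (simp add: coeff_sum)
  have "poly (map_poly of_int R) z = (\<Sum>c<p. of_int (f c - f (p-1)) * z ^ c)"
    unfolding R_def by (rule ev_sum_monom) simp
  also have "\<dots> = (\<Sum>c<p. of_int (f c) * z ^ c) - of_int (f (p-1)) * (\<Sum>c<p. z ^ c)"
    by (simp add: algebra_simps sum_subtractf sum_distrib_left sum_distrib_right)
  also have "(\<Sum>c<p. z ^ c) = 0"
    using cyc_root[OF z] unfolding cyc_def by (subst (asm) ev_sum_monom) auto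
  finally have "poly (map_poly of_int R) z = 0" using S by simp
  moreover have "degree R < p - 1"
  proof -
    have "degree R \<le> p - 2"
    proof (rule degree_le, intro allI impI)
      fix i assume i: "p - 2 < i"
      show "Polynomial.coeff R i = 0"
      proof (cases "i < p")
        case True
        hence "i = p - 1" using i p1 by linarith
        thus ?thesis by (simp add: cR)
      qed (simp add: cR)
    qed
    thus ?thesis using p1 by linarith
  qed
  ultimately have "R = 0" using cyc_LI[OF p z] by blast
  have fc: "f c = f (p-1)" if "c < p" for c
  proof -
    have "Polynomial.coeff R c = 0" using \<open>R = 0\<close> by simp
    thus ?thesis using cR[of c] that by simp
  qed
  have f0: "f 0 = f (p-1)" using fc[of 0] p1 by simp
  show ?thesis
  proof (intro allI impI)
    fix c assume "c < p"
    from fc[OF this] f0 show "f c = f 0" by linarith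
  qed
qed


definition chi :: "nat \<Rightarrow> nat \<Rightarrow> int" where "chi p a = Legendre (int a) (int p)"

lemma chi_vals: "chi p a = -1 \<or> chi p a = 0 \<or> chi p a = 1"
  by (auto simp: chi_def Legendre_def)

lemma chi_zero_iff: "chi p a = 0 \<longleftrightarrow> p dvd a"
  by (auto simp: chi_def Legendre_def cong_0_iff)

lemma chi_mod: "chi p (a mod p) = chi p a"
proof -
  have "[int (a mod p) = int a] (mod int p)" by (simp add: cong_def zmod_int)
  hence 1: "[int (a mod p) = 0] (mod int p) \<longleftrightarrow> [int a = 0] (mod int p)"
    using cong_trans cong_sym by metis
  have 2: "QuadRes (int p) (int (a mod p)) \<longleftrightarrow> QuadRes (int p) (int a)"
    unfolding QuadRes_def using \<open>[int (a mod p) = int a] (mod int p)\<close> cong_trans cong_sym by metis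
  show ?thesis unfolding chi_def Legendre_def using 1 2 by simp
qed

lemma chi_euler:
  assumes "prime p" "p > 2"
  shows "[chi p a = int a ^ ((p - 1) div 2)] (mod int p)"
  unfolding chi_def using euler_criterion[OF assms] .

lemma small_cong_eq:
  fixes x y :: int
  assumes "p > 2" "[x = y] (mod int p)" "x \<in> {-1,0,1}" "y \<in> {-1,0,1}"
  shows "x = y"
proof -
  have "int p dvd (x - y)" using assms(2) by (simp add: cong_iff_dvd_diff)
  moreover have "\<bar>x - y\<bar> < int p" using assms by auto
  ultimately show ?thesis using dvd_imp_le_int[of "x - y" "int p"] by (cases "x = y") auto
qed

lemma chi_in: "chi p a \<in> {-1,0,1}" using chi_vals[of p a] by auto

lemma chi_mult:
  assumes "prime p" "p > 2"
  shows "chi p (a * b) = chi p a * chi p b"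
proof -
  have "[chi p (a*b) = int (a*b) ^ ((p - 1) div 2)] (mod int p)" by (rule chi_euler[OF assms])
  moreover have "[chi p a * chi p b = int a ^ ((p - 1) div 2) * int b ^ ((p - 1) div 2)] (mod int p)"
    by (intro cong_mult chi_euler[OF assms])
  ultimately have "[chi p (a*b) = chi p a * chi p b] (mod int p)"
    by (simp add: power_mult_distrib) (meson cong_sym cong_trans)
  moreover have "chi p a * chi p b \<in> {-1,0,1}" using chi_vals[of p a] chi_vals[of p b] by auto
  ultimately show ?thesis using small_cong_eq[OF assms(2)] chi_in by blast
qed

lemma chi_minus1:
  assumes "prime p" "p mod 4 = 1"
  shows "chi p (p - 1) = 1"
proof -
  have p2: "p > 2" using assms prime_ge_2_nat[of p] by (cases "p = 2") auto
  have "[chi p (p-1) = int (p-1) ^ ((p - 1) div 2)] (mod int p)" by (rule chi_euler[OF assms(1) p2])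
  moreover have "[int (p-1) = -1] (mod int p)" using p2 by (simp add: cong_iff_dvd_diff of_nat_diff)
  hence "[int (p-1) ^ ((p - 1) div 2) = (-1) ^ ((p - 1) div 2)] (mod int p)" by (rule cong_pow)
  moreover have "even ((p - 1) div 2)"
  proof -
    have "p = 4 * (p div 4) + 1" using mult_div_mod_eq[of 4 p] assms(2) by simp
    hence "(p - 1) div 2 = 2 * (p div 4)" by linarith
    thus ?thesis by simp
  qed
  ultimately have "[chi p (p-1) = 1] (mod int p)" by (metis cong_trans neg_one_even_power)
  thus ?thesis using small_cong_eq[OF p2] chi_in by blast
qed

lemma chi_nonres:
  assumes "prime p" "p > 2"
  obtains g where "g < p" "chi p g = -1"
proof -
  obtain g where g: "residue_primroot p g" using prime_primitive_root_exists[of p] assms by force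
  have og: "ord p g = p - 1" using g assms(1) by (simp add: residue_primroot_def totient_prime)
  have cop: "coprime p g" using g by (simp add: residue_primroot_def)
  have "chi p g \<noteq> 0"
  proof
    assume "chi p g = 0"
    hence "p dvd g" by (simp add: chi_zero_iff)
    thus False using cop assms(1) by (metis coprime_common_divisor dvd_refl not_prime_unit)
  qed
  moreover have "chi p g \<noteq> 1"
  proof
    assume "chi p g = 1"
    hence "[1 = int g ^ ((p - 1) div 2)] (mod int p)" using chi_euler[OF assms, of g] by simp
    hence "[g ^ ((p - 1) div 2) = 1] (mod p)"
      by (metis cong_int_iff cong_sym of_nat_1 of_nat_power)
    hence "ord p g dvd (p - 1) div 2" by (simp add: ord_divides')
    moreover have "(p - 1) div 2 > 0" using assms by auto
    ultimately have "p - 1 \<le> (p - 1) div 2" using og by (metis dvd_imp_le)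
    thus False using assms by auto
  qed
  ultimately have "chi p g = -1" using chi_vals[of p g] by auto
  hence "chi p (g mod p) = -1" by (simp add: chi_mod)
  moreover have "g mod p < p" using assms by simp
  ultimately show ?thesis using that by blast
qed


locale rootp =
  fixes p :: nat and z :: complex
  assumes p: "prime p" and z1: "z ^ p = 1" and zdvd: "\<And>k. z ^ k = 1 \<Longrightarrow> p dvd k"
begin

lemma p2: "p \<ge> 2" using p prime_ge_2_nat by blast

lemma zpow_mod: "z ^ (k mod p) = z ^ k"
proof -
  have "z ^ k = z ^ (p * (k div p) + k mod p)" by simp
  also have "\<dots> = (z ^ p) ^ (k div p) * z ^ (k mod p)" by (metis power_add power_mult)
  finally show ?thesis using z1 by simp
qed

lemma zpow_cong: "k mod p = l mod p \<Longrightarrow> z ^ k = z ^ l"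
  by (metis zpow_mod)

lemma z_ne1: "z \<noteq> 1" using zdvd[of 1] p2 by auto

lemma geo: "(\<Sum>a<p. z ^ (a * m)) = (if p dvd m then of_nat p else 0)"
proof (cases "p dvd m")
  case True
  then obtain k where "m = p * k" by (elim dvdE)
  hence "z ^ (a * m) = 1" for a by (simp add: power_mult z1 mult.left_commute[of a p k] mult.commute[of a])
  thus ?thesis using True by simp
next
  case False
  define w where "w = z ^ m"
  have w1: "w \<noteq> 1" using False zdvd unfolding w_def by blast
  have wp: "w ^ p = 1" unfolding w_def by (metis power_mult mult.commute power_one z1)
  have "(w - 1) * (\<Sum>a<p. w ^ a) = w ^ p - 1" by (simp add: power_diff_1_eq)
  hence "(\<Sum>a<p. w ^ a) = 0" using w1 wp by simp
  moreover have "w ^ a = z ^ (a * m)" for a unfolding w_def by (metis power_mult mult.commute)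
  ultimately show ?thesis using False by simp
qed

lemma bij_mult:
  assumes "\<not> p dvd g"
  shows "bij_betw (\<lambda>a. g * a mod p) {..<p} {..<p}"
proof -
  have inj: "inj_on (\<lambda>a. g * a mod p) {..<p}"
  proof (rule inj_onI)
    fix a b assume a: "a \<in> {..<p}" and b: "b \<in> {..<p}" and e: "g * a mod p = g * b mod p"
    have "coprime g p" using assms p prime_imp_coprime coprime_commute by blast
    hence "[a = b] (mod p)" using e by (metis cong_def cong_mult_lcancel_nat)
    thus "a = b" using a b by (simp add: cong_def)
  qed
  moreover have "(\<lambda>a. g * a mod p) ` {..<p} \<subseteq> {..<p}" using p2 by auto
  ultimately show ?thesis by (simp add: bij_betw_def endo_inj_surj)
qed

lemma p_gt2: "p mod 4 = 1 \<Longrightarrow> p > 2"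
  using p2 by (cases "p = 2") auto

lemma sum_chi: assumes "p > 2" shows "(\<Sum>a<p. chi p a) = 0"
proof -
  obtain g where g: "g < p" "chi p g = -1" using chi_nonres[OF p assms] by blast
  have ng: "\<not> p dvd g" using g chi_zero_iff[of p g] by auto
  have "(\<Sum>a<p. chi p a) = (\<Sum>a<p. chi p (g * a mod p))"
    using sum.reindex_bij_betw[OF bij_mult[OF ng], of "chi p"] by simp
  also have "\<dots> = (\<Sum>a<p. - chi p a)"
    by (simp add: chi_mod chi_mult[OF p assms] g)
  finally show ?thesis by (simp add: sum_negf)
qed

definition G where "G = (\<Sum>a<p. of_int (chi p a) * z ^ a)"

lemma inner:
  assumes p4: "p > 2" and a: "0 < a" "a < p"
  shows "(\<Sum>b<p. of_int (chi p a * chi p b) * z ^ (a + b)) = (\<Sum>t<p. of_int (chi p t) * z ^ (a * (1 + t)))"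
proof -
  have na: "\<not> p dvd a" using a by (auto dest: dvd_imp_le)
  have ca: "chi p a * chi p a = 1" using chi_vals[of p a] chi_zero_iff[of p a] na by auto
  have "(\<Sum>b<p. of_int (chi p a * chi p b) * z ^ (a + b)) =
        (\<Sum>t<p. of_int (chi p a * chi p (a * t mod p)) * z ^ (a + a * t mod p))"
    using sum.reindex_bij_betw[OF bij_mult[OF na], of "\<lambda>b. of_int (chi p a * chi p b) * z ^ (a + b)"]
    by simp
  also have "\<dots> = (\<Sum>t<p. of_int (chi p t) * z ^ (a * (1 + t)))"
  proof (intro sum.cong refl)
    fix t
    have "chi p a * chi p (a * t mod p) = chi p t"
      by (simp add: chi_mod chi_mult[OF p p4] mult.assoc[symmetric] ca)
    moreover have "z ^ (a + a * t mod p) = z ^ (a * (1 + t))"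
      by (rule zpow_cong) (simp add: mod_add_right_eq algebra_simps)
    ultimately show "of_int (chi p a * chi p (a * t mod p)) * z ^ (a + a * t mod p) = of_int (chi p t) * z ^ (a * (1 + t))"
      by simp
  qed
  finally show ?thesis .
qed

lemma gauss_sq:
  assumes p4: "p mod 4 = 1"
  shows "G ^ 2 = of_nat p"
proof -
  have p3: "p > 2" using p_gt2[OF p4] .
  have "G ^ 2 = (\<Sum>a<p. \<Sum>b<p. of_int (chi p a * chi p b) * z ^ (a + b))"
    unfolding G_def power2_eq_square sum_product by (simp add: power_add mult_ac)
  also have "\<dots> = (\<Sum>a<p. if a = 0 then 0 else (\<Sum>t<p. of_int (chi p t) * z ^ (a * (1 + t))))"
  proof (intro sum.cong refl)
    fix a assume "a \<in> {..<p}"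
    thus "(\<Sum>b<p. of_int (chi p a * chi p b) * z ^ (a + b)) =
          (if a = 0 then 0 else (\<Sum>t<p. of_int (chi p t) * z ^ (a * (1 + t))))"
      using inner[OF p3, of a] chi_zero_iff[of p 0] by auto
  qed
  also have "\<dots> = (\<Sum>a<p. \<Sum>t<p. of_int (chi p t) * z ^ (a * (1 + t))) - (\<Sum>t<p. of_int (chi p t))"
  proof -
    have "(\<Sum>a<p. \<Sum>t<p. of_int (chi p t) * z ^ (a * (1 + t))) =
          (\<Sum>a<p. if a = 0 then 0 else (\<Sum>t<p. of_int (chi p t) * z ^ (a * (1 + t)))) + (\<Sum>t<p. of_int (chi p t))"
    proof -
      have "(\<Sum>a<p. \<Sum>t<p. of_int (chi p t) * z ^ (a * (1 + t))) =
            (\<Sum>a<p. (if a = 0 then 0 else (\<Sum>t<p. of_int (chi p t) * z ^ (a * (1 + t)))) +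
                    (if a = 0 then (\<Sum>t<p. of_int (chi p t)) else 0))"
        by (intro sum.cong refl) auto
      also have "\<dots> = (\<Sum>a<p. if a = 0 then 0 else (\<Sum>t<p. of_int (chi p t) * z ^ (a * (1 + t)))) + (\<Sum>t<p. of_int (chi p t))"
        using p3 by (simp add: sum.distrib)
      finally show ?thesis .
    qed
    thus ?thesis by simp
  qed
  also have "(\<Sum>t<p. (of_int (chi p t) :: complex)) = 0"
    using sum_chi[OF p3] by (metis of_int_0 of_int_sum)
  also have "(\<Sum>a<p. \<Sum>t<p. of_int (chi p t) * z ^ (a * (1 + t))) =
             (\<Sum>t<p. of_int (chi p t) * (\<Sum>a<p. z ^ (a * (1 + t))))"
    by (subst sum.swap) (simp add: sum_distrib_left)
  also have "\<dots> = (\<Sum>t<p. if t = p - 1 then of_int (chi p t) * of_nat p else 0)"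
  proof (intro sum.cong refl)
    fix t assume t: "t \<in> {..<p}"
    have "p dvd (1 + t) \<longleftrightarrow> t = p - 1"
    proof
      assume "p dvd (1 + t)"
      hence "p \<le> 1 + t" by (rule dvd_imp_le) simp
      thus "t = p - 1" using t by auto
    next
      assume "t = p - 1" thus "p dvd (1 + t)" using p2 by simp
    qed
    thus "of_int (chi p t) * (\<Sum>a<p. z ^ (a * (1 + t))) = (if t = p - 1 then of_int (chi p t) * of_nat p else 0)"
      unfolding geo[of "1 + t"] by simp
  qed
  also have "\<dots> = of_int (chi p (p - 1)) * of_nat p"
    using p2 by (simp add: sum.delta')
  also have "chi p (p - 1) = 1" by (rule chi_minus1[OF p p4])
  finally show ?thesis by simp
qed

end


lemma ff_power_card: "(x :: 'a :: {finite, field}) ^ CARD('a) = x"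
proof (cases "x = 0")
  case False
  have "x * (\<Prod>y\<in>UNIV-{0}. x * y) = x * x ^ (card (UNIV :: 'a set) - 1) * \<Prod>(UNIV-{0})"
    by (simp add: prod.distrib mult_ac)
  also have "x * x ^ (card (UNIV :: 'a set) - 1) = x ^ Suc (card (UNIV :: 'a set) - 1)"
    by (subst power_Suc) auto
  also have "Suc (card (UNIV :: 'a set) - 1) = card (UNIV :: 'a set)"
    using finite_UNIV_card_ge_0[where ?'a = 'a] by simp
  also have "(\<Prod>y\<in>UNIV-{0}. x * y) = (\<Prod>y\<in>UNIV-{0}. y)"
    by (rule prod.reindex_bij_witness[of _ "\<lambda>y. y / x" "\<lambda>y. x * y"]) (use False in auto)
  finally show ?thesis
    by simp
qed (use finite_UNIV_card_ge_0[where ?'a = 'a] in auto)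

lemma ff_card_ge2: "CARD('a :: {finite, field}) \<ge> 2"
proof -
  have "{0, 1} \<subseteq> (UNIV :: 'a set)" by simp
  hence "card {0, 1::'a} \<le> CARD('a)" by (intro card_mono) auto
  thus ?thesis by simp
qed

lemma ff_power_card1: "(x :: 'a :: {finite, field}) \<noteq> 0 \<Longrightarrow> x ^ (CARD('a) - 1) = 1"
proof -
  assume x: "x \<noteq> 0"
  have "x * x ^ (CARD('a) - 1) = x ^ CARD('a)"
    using ff_card_ge2[where 'a='a] by (simp flip: power_Suc)
  also have "\<dots> = x" by (rule ff_power_card)
  finally show ?thesis using x by simp
qed

lemma ff_inverse_pow: "(x :: 'a :: {finite, field}) \<noteq> 0 \<Longrightarrow> inverse x = x ^ (CARD('a) - 2)"
proof -
  assume x: "x \<noteq> 0"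
  have "x * x ^ (CARD('a) - 2) = x ^ (CARD('a) - 1)"
    using ff_card_ge2[where 'a='a] by (simp flip: power_Suc add: Suc_diff_Suc numeral_2_eq_2)
  also have "\<dots> = 1" by (rule ff_power_card1[OF x])
  finally show ?thesis using x by (metis inverse_unique)
qed

definition closedH :: "'a :: {finite, field} set \<Rightarrow> bool" where
  "closedH H \<longleftrightarrow> 0 \<in> H \<and> (\<forall>x\<in>H. \<forall>y\<in>H. x + y \<in> H) \<and> (\<forall>x\<in>H. \<forall>m. of_nat m * x \<in> H)"

lemma of_nat_mod_char: "(of_nat (j mod CHAR('a)) :: 'a :: ring_1) = of_nat j"
  by (simp add: of_nat_eq_iff_cong_CHAR cong_def)

lemma card_step:
  fixes H :: "'a :: {finite, field} set"
  assumes pr: "prime CHAR('a)" and cH: "closedH H" and v: "v \<notin> H"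
  defines "H' \<equiv> (\<lambda>(h, j). h + of_nat j * v) ` (H \<times> {..<CHAR('a)})"
  shows "closedH H'" "card H' = CHAR('a) * card H" "H \<subset> H'"
proof -
  let ?p = "CHAR('a)"
  have p2: "?p \<ge> 2" using pr prime_ge_2_nat by blast
  have H0: "0 \<in> H" and Hadd: "\<And>x y. x \<in> H \<Longrightarrow> y \<in> H \<Longrightarrow> x + y \<in> H"
    and Hsc: "\<And>x m. x \<in> H \<Longrightarrow> of_nat m * x \<in> H" using cH unfolding closedH_def by auto
  have memH': "h + of_nat j * v \<in> H'" if "h \<in> H" for h j
  proof -
    have "h + of_nat j * v = h + of_nat (j mod ?p) * v" by (simp add: of_nat_mod_char)
    moreover have "(h, j mod ?p) \<in> H \<times> {..<?p}" using that p2 by auto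
    ultimately show ?thesis unfolding H'_def by (metis (no_types, lifting) case_prod_conv image_eqI)
  qed
  show "closedH H'"
    unfolding closedH_def
  proof (intro conjI ballI allI)
    show "0 \<in> H'" using memH'[OF H0, of 0] by simp
  next
    fix x y assume "x \<in> H'" "y \<in> H'"
    then obtain h j h' j' where "h \<in> H" "h' \<in> H" "x = h + of_nat j * v" "y = h' + of_nat j' * v"
      unfolding H'_def by auto
    hence "x + y = (h + h') + of_nat (j + j') * v" by (simp add: algebra_simps)
    thus "x + y \<in> H'" using memH'[OF Hadd[OF \<open>h \<in> H\<close> \<open>h' \<in> H\<close>], of "j + j'"] by simp
  next
    fix x m assume "x \<in> H'"
    then obtain h j where "h \<in> H" "x = h + of_nat j * v" unfolding H'_def by auto
    hence "of_nat m * x = of_nat m * h + of_nat (m * j) * v" by (simp add: algebra_simps)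
    thus "of_nat m * x \<in> H'" using memH'[OF Hsc[OF \<open>h \<in> H\<close>, of m], of "m * j"] by simp
  qed
  have neg: "- h \<in> H" if "h \<in> H" for h
  proof -
    have "(of_nat (?p - 1) :: 'a) = - 1" using p2 by (simp add: of_nat_diff)
    hence "- h = of_nat (?p - 1) * h" by simp
    thus ?thesis using Hsc that by simp
  qed
  have inj: "inj_on (\<lambda>(h, j). h + of_nat j * v) (H \<times> {..<?p})"
  proof -
    have key: "j = j'" if "h \<in> H" "h' \<in> H" "j < ?p" "j' < ?p" "j' \<le> j" "h + of_nat j * v = h' + of_nat j' * v" for h h' j j'
    proof (rule ccontr)
      assume "j \<noteq> j'"
      define d where "d = j - j'"
      have d: "0 < d" "d < ?p" using that \<open>j \<noteq> j'\<close> unfolding d_def by auto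
      have "of_nat d * v = h' + - h" using that unfolding d_def by (simp add: of_nat_diff algebra_simps)
      hence dvH: "of_nat d * v \<in> H" using Hadd[OF \<open>h' \<in> H\<close> neg[OF \<open>h \<in> H\<close>]] by simp
      have dn0: "(of_nat d :: 'a) \<noteq> 0" using d by (auto simp: of_nat_eq_0_iff_char_dvd dest: dvd_imp_le)
      have "v = inverse (of_nat d) * (of_nat d * v)" using dn0 by simp
      also have "inverse (of_nat d :: 'a) = of_nat (d ^ (CARD('a) - 2))"
        using ff_inverse_pow[OF dn0] by simp
      finally have veq: "v = of_nat (d ^ (CARD('a) - 2)) * (of_nat d * v)" .
      have "v \<in> H" by (subst veq) (rule Hsc[OF dvH])
      thus False using v by simp
    qed
    show ?thesis
    proof (rule inj_onI, clarsimp)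
      fix h j h' j' assume a: "h \<in> H" "j < ?p" "h' \<in> H" "j' < ?p" "h + of_nat j * v = h' + of_nat j' * v"
      have "j = j'"
      proof (cases "j' \<le> j")
        case True thus ?thesis using key a by blast
      next
        case False thus ?thesis using key[of h' h j' j] a by simp
      qed
      thus "h = h' \<and> j = j'" using a by simp
    qed
  qed
  show "card H' = ?p * card H"
    unfolding H'_def by (simp add: card_image[OF inj] card_cartesian_product)
  have "H \<subseteq> H'"
  proof
    fix h assume "h \<in> H" thus "h \<in> H'" using memH'[of h 0] by simp
  qed
  moreover have "v \<in> H'" using memH'[OF H0, of 1] by simp
  ultimately show "H \<subset> H'" using v by blast
qed

lemma ff_card_prime_power:
  assumes pr: "prime CHAR('a :: {finite, field})"
  shows "\<exists>n. CARD('a) = CHAR('a) ^ n"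
proof -
  have main: "\<And>H :: 'a set. closedH H \<Longrightarrow> (\<exists>k. card H = CHAR('a) ^ k) \<Longrightarrow> \<exists>n. CARD('a) = CHAR('a) ^ n"
  proof -
    fix H :: "'a set"
    show "closedH H \<Longrightarrow> (\<exists>k. card H = CHAR('a) ^ k) \<Longrightarrow> \<exists>n. CARD('a) = CHAR('a) ^ n"
    proof (induction "card (UNIV - H)" arbitrary: H rule: less_induct)
      case (less H)
      show ?case
      proof (cases "H = UNIV")
        case True thus ?thesis using less by auto
      next
        case False
        then obtain v where v: "v \<notin> H" by auto
        define H' where "H' = (\<lambda>(h, j). h + of_nat j * v) ` (H \<times> {..<CHAR('a)})"
        note st = card_step[OF pr less(2) v, folded H'_def]
        have "card (UNIV - H') < card (UNIV - H)"
          using st(3) by (intro psubset_card_mono) auto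
        moreover obtain k where "card H = CHAR('a) ^ k" using less(3) by blast
        hence "card H' = CHAR('a) ^ Suc k" using st(2) by simp
        ultimately show ?thesis using less(1)[of H'] st(1) by blast
      qed
    qed
  qed
  have "closedH {0 :: 'a}" unfolding closedH_def by simp
  moreover have "card {0 :: 'a} = CHAR('a) ^ 0" by simp
  ultimately show ?thesis using main by blast
qed


context
  assumes pr: "prime CHAR('a :: {finite, field})"
begin

lemma field_degree_eq: "CARD('a) = CHAR('a) ^ field_degree TYPE('a)"
proof -
  obtain n where n: "CARD('a) = CHAR('a) ^ n" using ff_card_prime_power[OF pr] by blast
  have p1: "CHAR('a) > 1" using pr prime_gt_1_nat by blast
  have "\<exists>!n. CARD('a) = CHAR('a) ^ n"
    using n p1 by (auto simp: power_inject_exp)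
  thus ?thesis unfolding field_degree_def by (rule theI')
qed

lemma field_degree_pos: "field_degree TYPE('a) \<ge> 1"
proof (rule ccontr)
  assume "\<not> field_degree TYPE('a) \<ge> 1"
  hence "CARD('a) = 1" using field_degree_eq by simp
  thus False using ff_card_ge2[where 'a='a] by simp
qed

lemma pow_char_power_card: "(x :: 'a) ^ (CHAR('a) ^ field_degree TYPE('a)) = x"
  using ff_power_card[of x] field_degree_eq by simp

lemma abs_trace_pow: "(abs_trace (x :: 'a)) ^ CHAR('a) = abs_trace x"
proof -
  let ?p = "CHAR('a)" and ?n = "field_degree TYPE('a)"
  have "(abs_trace x) ^ ?p = (\<Sum>i<?n. (x ^ (?p ^ i)) ^ ?p)"
    unfolding abs_trace_def by (rule freshmans_dream_sum[OF pr refl])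
  also have "\<dots> = (\<Sum>i<?n. x ^ (?p ^ Suc i))"
    by (simp add: power_mult[symmetric] mult.commute)
  also have "\<dots> = abs_trace x"
  proof -
    have "?n \<noteq> 0" using field_degree_pos by simp
    then obtain m where m: "?n = Suc m" using not0_implies_Suc by blast
    have "(\<Sum>i<Suc m. x ^ (?p ^ Suc i)) = (\<Sum>i<m. x ^ (?p ^ Suc i)) + x ^ (?p ^ Suc m)"
      by simp
    also have "x ^ (?p ^ Suc m) = x" using pow_char_power_card[of x] m by simp
    also have "(\<Sum>i<m. x ^ (?p ^ Suc i)) + x = (\<Sum>i<Suc m. x ^ (?p ^ i))"
      by (subst sum.lessThan_Suc_shift) simp
    finally show ?thesis unfolding abs_trace_def m .
  qed
  finally show ?thesis .
qed

lemma frob_fixed: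
  assumes "(y :: 'a) ^ CHAR('a) = y"
  shows "\<exists>k < CHAR('a). y = of_nat k"
proof -
  let ?p = "CHAR('a)"
  have p2: "?p \<ge> 2" using pr prime_ge_2_nat by blast
  define P :: "'a poly" where "P = Polynomial.monom 1 ?p - Polynomial.monom 1 1"
  have cP: "Polynomial.coeff P ?p = 1"
    using p2 unfolding P_def by simp
  hence P0: "P \<noteq> 0" by auto
  have dP: "degree P \<le> ?p"
    unfolding P_def using p2 by (intro degree_diff_le) (auto intro: order_trans[OF degree_monom_le])
  have roots: "{y. poly P y = 0} = {y. y ^ ?p = y}" unfolding P_def by (auto simp: poly_monom)
  have "card {y :: 'a. y ^ ?p = y} \<le> ?p" using card_poly_roots_bound[OF P0] dP roots by simp
  moreover have sub: "of_nat ` {..<?p} \<subseteq> {y :: 'a. y ^ ?p = y}"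
  proof
    fix y assume "y \<in> (of_nat ` {..<?p} :: 'a set)"
    then obtain k where "y = of_nat k" by auto
    have cg: "[k ^ ?p = k] (mod ?p)"
    proof (cases "CHAR('a) dvd k")
      case True
      hence "?p dvd k ^ ?p" using p2 by (meson dvd_power dvd_trans not_numeral_le_zero le0 less_le_trans zero_less_numeral gr0I)
      thus ?thesis using True by (simp add: cong_def)
    next
      case False
      have "[k ^ (?p - 1) = 1] (mod ?p)" by (rule fermat_theorem[OF pr False])
      hence "[k * k ^ (?p - 1) = k * 1] (mod ?p)" by (rule cong_scalar_left)
      moreover have "k * k ^ (?p - 1) = k ^ ?p" using p2 by (simp flip: power_Suc)
      ultimately show ?thesis by simp
    qed
    have "(of_nat k :: 'a) ^ ?p = of_nat (k ^ ?p)" by simp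
    also have "(of_nat (k ^ ?p) :: 'a) = of_nat k" using cg by (simp only: of_nat_eq_iff_cong_CHAR)
    finally show "y \<in> {y. y ^ ?p = y}" using \<open>y = of_nat k\<close> by simp
  qed
  moreover have "card (of_nat ` {..<?p} :: 'a set) = ?p"
    by (subst card_image) (auto simp: inj_on_def of_nat_eq_iff_cong_CHAR cong_def)
  moreover have "card (of_nat ` {..<?p} :: 'a set) \<le> card {y :: 'a. y ^ ?p = y}"
    using sub by (intro card_mono) auto
  ultimately have "of_nat ` {..<?p} = {y :: 'a. y ^ ?p = y}"
    by (intro card_subset_eq) auto
  thus ?thesis using assms by blast
qed

lemma abs_trace_nat_eq:
  assumes "abs_trace (x :: 'a) = of_nat k" "k < CHAR('a)"
  shows "abs_trace_nat x = k"
  unfolding abs_trace_nat_def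
proof (rule the_equality)
  show "k < CHAR('a) \<and> of_nat k = abs_trace x" using assms by simp
next
  fix k' assume "k' < CHAR('a) \<and> of_nat k' = abs_trace x"
  hence "(of_nat k' :: 'a) = of_nat k" "k' < CHAR('a)" using assms by auto
  thus "k' = k" using assms(2) by (auto simp: of_nat_eq_iff_cong_CHAR cong_def)
qed

lemma abs_trace_nat_props: "abs_trace_nat (x :: 'a) < CHAR('a) \<and> of_nat (abs_trace_nat x) = abs_trace x"
proof -
  obtain k where "k < CHAR('a)" "abs_trace x = of_nat k" using frob_fixed[OF abs_trace_pow] by blast
  thus ?thesis using abs_trace_nat_eq by simp
qed

lemma abs_trace_nat_0: "abs_trace_nat (0 :: 'a) = 0"
proof -
  have "abs_trace (0 :: 'a) = of_nat 0" unfolding abs_trace_def using pr by (simp add: prime_gt_0_nat power_0_left)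
  thus ?thesis using abs_trace_nat_eq pr prime_gt_0_nat by blast
qed

end


context
  assumes pr: "prime CHAR('a :: {finite, field})"
begin

lemma pow_reduce:
  assumes "m \<ge> 1"
  shows "(x :: 'a) ^ m = x ^ ((m - 1) mod (CARD('a) - 1) + 1)"
proof (cases "x = 0")
  case True thus ?thesis using assms by (simp add: power_0_left)
next
  case False
  let ?N = "CARD('a) - 1"
  have x1: "x ^ ?N = 1" by (rule ff_power_card1[OF False])
  have red: "x ^ a = x ^ (a mod ?N)" for a
  proof -
    have "x ^ a = x ^ (?N * (a div ?N) + a mod ?N)" by simp
    also have "\<dots> = (x ^ ?N) ^ (a div ?N) * x ^ (a mod ?N)" by (metis power_add power_mult)
    finally show ?thesis using x1 by simp
  qed
  have "((m - 1) mod ?N + 1) mod ?N = m mod ?N"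
    using assms by (metis Suc_diff_le diff_Suc_1 mod_Suc_eq add.commute plus_1_eq_Suc)
  thus ?thesis using red[of m] red[of "(m - 1) mod ?N + 1"] by simp
qed

lemma neg_pow_odd:
  assumes "odd m" shows "(- (b :: 'a)) ^ m = - (b ^ m)"
  using assms by (simp add: power_minus_odd)

lemma trace_expand:
  assumes oddp: "odd CHAR('a)"
  shows "abs_trace ((x :: 'a) ^ s - u * x) =
    (\<Sum>i<field_degree TYPE('a). x ^ (s * CHAR('a) ^ i) - u ^ (CHAR('a) ^ i) * x ^ (CHAR('a) ^ i))"
  unfolding abs_trace_def
proof (intro sum.cong refl)
  fix i
  let ?m = "CHAR('a) ^ i"
  have om: "odd ?m" using oddp by simp
  have "(x ^ s - u * x) ^ ?m = (x ^ s + (- (u * x))) ^ ?m" by simp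
  also have "\<dots> = (x ^ s) ^ ?m + (- (u * x)) ^ ?m" by (rule freshmans_dream'[OF pr refl])
  also have "(- (u * x)) ^ ?m = - ((u * x) ^ ?m)" by (rule neg_pow_odd[OF om])
  finally show "(x ^ s - u * x) ^ ?m = x ^ (s * ?m) - u ^ ?m * x ^ ?m"
    by (simp add: power_mult power_mult_distrib)
qed

lemma nondeg_trace:
  assumes oddp: "odd CHAR('a)" and s: "s > 0" and cop: "coprime s (CARD('a) - 1)"
    and nd: "\<not> degenerate TYPE('a) s"
  shows "\<exists>x :: 'a. abs_trace (x ^ s - u * x) \<noteq> 0"
proof (rule ccontr)
  assume "\<not> (\<exists>x :: 'a. abs_trace (x ^ s - u * x) \<noteq> 0)"
  hence all0: "\<And>x :: 'a. abs_trace (x ^ s - u * x) = 0" by blast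
  let ?p = "CHAR('a)" and ?n = "field_degree TYPE('a)" and ?q = "CARD('a)"
  let ?N = "?q - 1"
  have p3: "?p \<ge> 3" using pr oddp prime_ge_2_nat[of ?p] by (cases "?p = 2") auto
  have qpn: "?q = ?p ^ ?n" by (rule field_degree_eq[OF pr])
  have n1: "?n \<ge> 1" by (rule field_degree_pos[OF pr])
  have pi_lt: "?p ^ i < ?N" if "i < ?n" for i
  proof -
    have "?p ^ i \<le> ?p ^ (?n - 1)" using that p3 by (intro power_increasing) auto
    moreover have "?p ^ ?n = ?p * ?p ^ (?n - 1)" using n1 by (metis power_eq_if not_one_le_zero)
    moreover have "?p ^ (?n - 1) \<ge> 1" using p3 by simp
    ultimately have "3 * ?p ^ i \<le> ?q" using qpn p3 by (metis mult_le_mono)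
    moreover have "?p ^ i \<ge> 1" using p3 by simp
    ultimately show ?thesis by linarith
  qed
  have N1: "?N > 1" using pi_lt[of 0] n1 by simp
  define e where "e i = (s * ?p ^ i - 1) mod ?N + 1" for i
  have spos: "s * ?p ^ i \<ge> 1" for i using s p3 by simp
  have e_le: "e i \<le> ?N" for i unfolding e_def using N1 by (metis Suc_leI add.commute mod_less_divisor plus_1_eq_Suc zero_less_diff less_imp_diff_less zero_less_one order_less_trans)
  have e_mod: "e i mod ?N = (s * ?p ^ i) mod ?N" for i
    unfolding e_def using spos[of i] by (metis Suc_diff_le diff_Suc_1 mod_Suc_eq add.commute plus_1_eq_Suc)
  define P :: "'a poly" where
    "P = (\<Sum>i<?n. Polynomial.monom 1 (e i) - Polynomial.monom (u ^ (?p ^ i)) (?p ^ i))"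
  have polyP: "poly P x = abs_trace (x ^ s - u * x)" for x
  proof -
    have "poly P x = (\<Sum>i<?n. x ^ e i - u ^ (?p ^ i) * x ^ (?p ^ i))"
      unfolding P_def by (simp add: poly_sum poly_monom)
    also have "\<dots> = (\<Sum>i<?n. x ^ (s * ?p ^ i) - u ^ (?p ^ i) * x ^ (?p ^ i))"
      by (intro sum.cong refl) (simp add: e_def pow_reduce[OF spos])
    finally show ?thesis using trace_expand[OF oddp] by simp
  qed
  have e_inj: "e i = e 0 \<longleftrightarrow> i = 0" if "i < ?n" for i
  proof
    assume "e i = e 0"
    hence "[s * ?p ^ i = s * 1] (mod ?N)" using e_mod[of i] e_mod[of 0] by (simp add: cong_def)
    hence "[?p ^ i = 1] (mod ?N)" using cong_mult_lcancel_nat[OF cop] by blast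
    hence "?p ^ i mod ?N = 1" using N1 by (simp add: cong_def)
    hence "?p ^ i = 1" using pi_lt[OF that] by simp
    show "i = 0"
    proof (rule ccontr)
      assume "i \<noteq> 0"
      hence "?p \<le> ?p ^ i" using p3 by (simp add: self_le_power)
      thus False using \<open>?p ^ i = 1\<close> p3 by simp
    qed
  qed simp
  have pi_ne: "?p ^ i \<noteq> e 0" for i
  proof
    assume "?p ^ i = e 0"
    hence "[s = ?p ^ i] (mod ?N)" using e_mod[of 0] by (simp add: cong_def)
    thus False using nd unfolding degenerate_def by blast
  qed
  have "Polynomial.coeff P (e 0) = (\<Sum>i<?n. (if i = 0 then 1 else 0))"
    unfolding P_def coeff_sum
    by (intro sum.cong refl) (auto simp: e_inj pi_ne Polynomial.coeff_monom)
  also have "\<dots> = 1" using n1 by simp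
  finally have "P \<noteq> 0" by auto
  have "degree P \<le> ?N"
    unfolding P_def
  proof (rule degree_sum_le)
    show "finite {..<?n}" by simp
  next
    fix i assume "i \<in> {..<?n}"
    hence "i < ?n" by simp
    show "degree (Polynomial.monom 1 (e i) - Polynomial.monom (u ^ (?p ^ i)) (?p ^ i)) \<le> ?N"
      using e_le[of i] pi_lt[OF \<open>i < ?n\<close>]
      by (intro degree_diff_le) (auto intro: order_trans[OF degree_monom_le])
  qed
  moreover have "card {x. poly P x = 0} = ?q" using polyP all0 by simp
  moreover have "card {x. poly P x = 0} \<le> degree P" by (rule card_poly_roots_bound[OF \<open>P \<noteq> 0\<close>])
  ultimately show False using N1 by linarith
qed

end


definition zeta :: "nat \<Rightarrow> complex" where "zeta p = exp (2 * of_real pi * \<i> / of_nat p)"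

lemma zeta_pow: "zeta p ^ k = exp (2 * of_real pi * \<i> * of_nat k / of_nat p)"
  unfolding zeta_def by (simp flip: exp_of_nat_mult add: field_simps)

lemma zeta_rootp: assumes "prime p" shows "rootp p (zeta p)"
proof
  show "prime p" by fact
  have p0: "p > 0" using assms prime_gt_0_nat by blast
  show "zeta p ^ p = 1" using p0 by (simp add: zeta_pow)
  fix k assume "zeta p ^ k = 1"
  hence "exp (2 * of_real pi * \<i> * of_nat k / of_nat p) = 1" by (simp add: zeta_pow)
  then obtain n :: int where n: "Im (2 * of_real pi * \<i> * of_nat k / of_nat p) = of_int (2 * n) * pi"
    by (auto simp: exp_eq_1)
  have "Im (2 * of_real pi * \<i> * of_nat k / of_nat p) = 2 * pi * real k / real p"
    by (simp add: Im_divide_of_real[symmetric])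
  hence "2 * pi * real k / real p = 2 * real_of_int n * pi" using n by simp
  hence "real k = real_of_int n * real p" using p0 by (simp add: field_simps)
  hence "int k = n * int p" by (metis of_int_eq_iff of_int_mult of_int_of_nat_eq)
  hence "int p dvd int k" by simp
  thus "p dvd k" by simp
qed

lemma psi_zeta: "psi (y :: 'a :: {finite, field}) = zeta CHAR('a) ^ abs_trace_nat y"
  unfolding psi_def zeta_pow by simp

lemma irr_sqrt_prime:
  fixes x y :: int
  assumes "prime p" "real_of_int x + real_of_int y * sqrt (real p) = 0"
  shows "x = 0 \<and> y = 0"
proof (cases "y = 0")
  case True thus ?thesis using assms by simp
next
  case False
  hence "sqrt (real p) = - real_of_int x / real_of_int y" using assms(2) by (simp add: field_simps)
  hence "sqrt (real p) \<in> \<rat>" by simp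
  moreover have "sqrt (real p) \<notin> \<rat>"
  proof
    from \<open>prime p\<close> have p: "p > 1" by (rule prime_gt_1_nat)
    assume "sqrt (real p) \<in> \<rat>"
    then obtain m n :: nat
      where n: "n \<noteq> 0" and sqrt_rat: "\<bar>sqrt (real p)\<bar> = m / n" and "coprime m n"
      by (rule Rats_abs_nat_div_natE)
    have eq: "m\<^sup>2 = p * n\<^sup>2"
    proof -
      from n and sqrt_rat have "m = \<bar>sqrt (real p)\<bar> * n" by simp
      then have "m\<^sup>2 = (sqrt (real p))\<^sup>2 * n\<^sup>2" by (simp add: power_mult_distrib)
      also have "(sqrt (real p))\<^sup>2 = p" by simp
      also have "\<dots> * n\<^sup>2 = p * n\<^sup>2" by simp
      finally show ?thesis by linarith
    qed
    have "p dvd m \<and> p dvd n"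
    proof
      from eq have "p dvd m\<^sup>2" ..
      with \<open>prime p\<close> show "p dvd m" by (rule prime_dvd_power)
      then obtain k where "m = p * k" ..
      with eq have "p * n\<^sup>2 = p\<^sup>2 * k\<^sup>2" by (simp add: power_mult_distrib)
      with p have "n\<^sup>2 = p * k\<^sup>2" by (simp add: power2_eq_square)
      then have "p dvd n\<^sup>2" ..
      with \<open>prime p\<close> show "p dvd n" by (rule prime_dvd_power)
    qed
    then have "p dvd gcd m n" by simp
    with \<open>coprime m n\<close> have "p = 1" by simp
    with p show False by simp
  qed
  ultimately show ?thesis by blast
qed

lemma sum_fiber:
  fixes T :: "'b \<Rightarrow> nat" and F :: "nat \<Rightarrow> 'c :: comm_semiring_1"
  assumes fin: "finite (UNIV :: 'b set)" and T: "\<And>x. T x < p"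
  shows "(\<Sum>x\<in>UNIV. F (T x)) = (\<Sum>c<p. of_nat (card {x. T x = c}) * F c)"
proof -
  have "(\<Sum>x\<in>UNIV. F (T x)) = (\<Sum>x\<in>UNIV. \<Sum>c<p. if T x = c then F c else 0)"
    using T by (intro sum.cong refl) (simp add: sum.delta)
  also have "\<dots> = (\<Sum>c<p. \<Sum>x\<in>UNIV. if T x = c then F c else 0)" by (rule sum.swap)
  also have "\<dots> = (\<Sum>c<p. of_nat (card {x. T x = c}) * F c)"
  proof (intro sum.cong refl)
    fix c
    have "(\<Sum>x\<in>UNIV. if T x = c then F c else 0) = (\<Sum>x\<in>{x. T x = c}. F c)"
      using fin by (simp add: sum.If_cases Int_def)
    also have "\<dots> = of_nat (card {x. T x = c}) * F c" by simp
    finally show "(\<Sum>x\<in>UNIV. if T x = c then F c else 0) = of_nat (card {x. T x = c}) * F c" .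
  qed
  finally show ?thesis .
qed


lemma final_arith:
  fixes n0 n1 ng p q :: nat and e :: int
  assumes pr: "prime p" and p5: "p \<ge> 5" and pq: "p dvd q" and n0: "1 \<le> n0" and n0q: "n0 \<le> q"
    and sumeq: "int (p - 1) * (int n1 + int ng) = 2 * (int q - int n0)"
    and e: "e = 1 \<or> e = -1"
  defines "I \<equiv> 2 * int n0 - int n1 - int ng" and "J \<equiv> e * (int n1 - int ng)"
  shows "[I = J] (mod 2) \<and> int p dvd I \<and>
         (n0 < q \<longrightarrow>
            - real q < - 2 * (real q - 1) / (real p - 1)
            \<and> - 2 * (real q - 1) / (real p - 1) < real_of_int I
            \<and> real_of_int I < 2 * real q
            \<and> \<bar>real_of_int J\<bar> \<le> 2 * (real q - 1) / (real p - 1)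
            \<and> 2 * (real q - 1) / (real p - 1) < real q)"
proof (intro conjI impI)
  show "[I = J] (mod 2)"
  proof -
    have "I - J = 2 * (int n0 - int n1) \<or> I - J = 2 * (int n0 - int ng)"
      using e unfolding I_def J_def by auto
    hence "2 dvd (I - J)" by (metis dvd_triv_left)
    thus ?thesis by (rule iffD2[OF cong_iff_dvd_diff])
  qed
  show "int p dvd I"
  proof -
    have "int (p - 1) * I = 2 * int p * int n0 - 2 * int q"
      unfolding I_def using sumeq p5 by (simp add: algebra_simps of_nat_diff)
    moreover have "int p dvd 2 * int p * int n0 - 2 * int q" using pq by simp
    ultimately have "int p dvd int (p - 1) * I" by simp
    moreover have "\<not> int p dvd int (p - 1)"
    proof
      assume "int p dvd int (p - 1)"
      hence "p dvd p - 1" by simp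
      hence "p \<le> p - 1" using p5 by (intro dvd_imp_le) auto
      thus False using p5 by simp
    qed
    moreover have "prime (int p)" using pr by simp
    ultimately show ?thesis by (simp add: prime_dvd_mult_iff)
  qed
  assume lt: "n0 < q"
  define B where "B = 2 * (real q - 1) / (real p - 1)"
  have p1: "real p - 1 > 0" using p5 by simp
  have S: "(real p - 1) * (real n1 + real ng) = 2 * (real q - real n0)"
  proof -
    have "real_of_int (int (p - 1) * (int n1 + int ng)) = real_of_int (2 * (int q - int n0))"
      using sumeq by simp
    thus ?thesis using p5 by (simp add: of_nat_diff)
  qed
  have SB: "real n1 + real ng \<le> B"
    unfolding B_def using S p1 n0 by (simp add: pos_le_divide_eq mult.commute)
  have hint: "real p * real q \<ge> 5 * real q" using p5 by (intro mult_right_mono) auto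
  have h2: "2 * (real q - 1) < real q * (real p - 1)"
    using hint by (simp add: algebra_simps)
  have Bq: "B < real q"
    unfolding B_def using h2 p1 by (simp add: pos_divide_less_eq)
  have mB: "- 2 * (real q - 1) / (real p - 1) = - B" unfolding B_def using p1 by (simp add: field_simps)
  show "- real q < - 2 * (real q - 1) / (real p - 1)" using Bq unfolding mB by simp
  show "2 * (real q - 1) / (real p - 1) < real q" using Bq unfolding B_def by simp
  show "- 2 * (real q - 1) / (real p - 1) < real_of_int I"
    using SB n0 unfolding mB I_def by simp
  show "real_of_int I < 2 * real q" using lt unfolding I_def by simp
  show "\<bar>real_of_int J\<bar> \<le> 2 * (real q - 1) / (real p - 1)"
    using SB e unfolding J_def B_def by auto
qed


theorem lemma3p6:
  fixes s :: nat and u :: "'a::{finite,field}"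
  defines "p \<equiv> CHAR('a)" and "q \<equiv> CARD('a)"
  assumes "prime p" and "p mod 4 = 1"
    and "s > 0" and "coprime s (q - 1)"
    and "\<exists>a b :: rat. weil_sum s u = of_rat a + of_rat b * complex_of_real (sqrt (real p))"
  shows "(\<exists>!IJ :: int \<times> int. weil_sum s u = (of_int (fst IJ) + of_int (snd IJ) * complex_of_real (sqrt (real p))) / 2)
    \<and> (\<forall>I J :: int. weil_sum s u = (of_int I + of_int J * complex_of_real (sqrt (real p))) / 2 \<longrightarrow>
         [I = J] (mod 2) \<and> int p dvd I \<and>
         (\<not> degenerate TYPE('a) s \<longrightarrow>
            - real q < - 2 * (real q - 1) / (real p - 1)
            \<and> - 2 * (real q - 1) / (real p - 1) < real_of_int I
            \<and> real_of_int I < 2 * real q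
            \<and> \<bar>real_of_int J\<bar> \<le> 2 * (real q - 1) / (real p - 1)
            \<and> 2 * (real q - 1) / (real p - 1) < real q))"
proof -
  have prp: "prime p" and p4: "p mod 4 = 1" and s0: "s > 0" and cop: "coprime s (q - 1)"
    using assms by auto
  have pr: "prime CHAR('a)" using prp unfolding p_def .
  have p2: "p \<ge> 2" using prp prime_ge_2_nat by blast
  have p5: "p \<ge> 5" using p2 p4 by presburger
  have oddp: "odd CHAR('a)" using p4 unfolding p_def by presburger
  define z where "z = zeta p"
  interpret rootp p z unfolding z_def by (rule zeta_rootp[OF prp])
  define sq where "sq = complex_of_real (sqrt (real p))"
  have finU: "finite (UNIV :: 'a set)" by simp
  define T where "T x = abs_trace_nat (x ^ s - u * x)" for x :: 'a
  have Tlt: "T x < p" for x unfolding T_def p_def using abs_trace_nat_props[OF pr] by blast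
  define n where "n c = card {x :: 'a. T x = c}" for c
  have W: "weil_sum s u = (\<Sum>c<p. of_nat (n c) * z ^ c)"
  proof -
    have "weil_sum s u = (\<Sum>x\<in>UNIV. z ^ T x)"
      unfolding weil_sum_def T_def z_def p_def by (simp add: psi_zeta)
    also have "\<dots> = (\<Sum>c<p. of_nat (n c) * z ^ c)"
      unfolding n_def by (rule sum_fiber[OF finU Tlt])
    finally show ?thesis .
  qed
  have qsum: "q = (\<Sum>c<p. n c)"
  proof -
    have "q = (\<Sum>x\<in>(UNIV :: 'a set). (\<lambda>c. 1::nat) (T x))" unfolding q_def by simp
    also have "\<dots> = (\<Sum>c<p. of_nat (n c) * 1)"
      unfolding n_def by (rule sum_fiber[OF finU Tlt])
    finally show ?thesis by simp
  qed
  have T0: "T 0 = 0" unfolding T_def using s0 abs_trace_nat_0[OF pr] by (simp add: power_0_left)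
  have n0: "n 0 \<ge> 1"
  proof -
    have "{x :: 'a. T x = 0} \<noteq> {}" using T0 by auto
    thus ?thesis unfolding n_def by (simp add: Suc_le_eq card_gt_0_iff)
  qed
  have n0q: "n 0 \<le> q" unfolding n_def q_def by (rule card_mono) auto
  have nondeg: "n 0 < q" if nd: "\<not> degenerate TYPE('a) s"
  proof -
    have cop': "coprime s (CARD('a) - 1)" using cop unfolding q_def .
    obtain x :: 'a where x: "abs_trace (x ^ s - u * x) \<noteq> 0"
      using nondeg_trace[OF pr oddp s0 cop' nd] by blast
    have "T x \<noteq> 0"
    proof
      assume "T x = 0"
      hence "abs_trace (x ^ s - u * x) = of_nat 0"
        using abs_trace_nat_props[OF pr, of "x ^ s - u * x"] unfolding T_def by simp
      thus False using x by simp
    qed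
    hence "x \<notin> {y :: 'a. T y = 0}" by simp
    hence "{y :: 'a. T y = 0} \<subset> UNIV" by blast
    thus ?thesis unfolding n_def q_def by (rule psubset_card_mono[OF finU])
  qed
  have G2: "G ^ 2 = of_nat p" by (rule gauss_sq[OF p4])
  have sq2: "sq ^ 2 = of_nat p" unfolding sq_def
    by (simp flip: of_real_power) 
  have "(G - sq) * (G + sq) = 0" using G2 sq2 by (simp add: algebra_simps power2_eq_square)
  hence "G = sq \<or> G = - sq" by (auto simp: add_eq_0_iff2)
  then obtain e :: int where e: "e = 1 \<or> e = -1" and sqe: "sq = of_int e * G"
    by (metis mult_minus1 minus_minus of_int_1 of_int_minus mult_1)
  have ee: "e * e = 1" using e by auto
  obtain a b :: rat where ab: "weil_sum s u = of_rat a + of_rat b * sq"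
    using assms(7) unfolding sq_def by blast
  obtain A1 D1 where qa: "quotient_of a = (A1, D1)" by (cases "quotient_of a") auto
  obtain B1 D2 where qb: "quotient_of b = (B1, D2)" by (cases "quotient_of b") auto
  have D1: "D1 > 0" using quotient_of_denom_pos[OF qa] .
  have D2: "D2 > 0" using quotient_of_denom_pos[OF qb] .
  define D0 where "D0 = D1 * D2"
  define A0 where "A0 = A1 * D2"
  define B0 where "B0 = B1 * D1"
  have D0: "D0 > 0" unfolding D0_def using D1 D2 by simp
  have "(of_rat a :: complex) = of_rat (of_int A1 / of_int D1)" by (subst quotient_of_div[OF qa]) (rule refl)
  hence ra: "(of_rat a :: complex) = of_int A0 / of_int D0"
    using D1 D2 unfolding A0_def D0_def by (simp add: of_rat_divide field_simps)
  have "(of_rat b :: complex) = of_rat (of_int B1 / of_int D2)" by (subst quotient_of_div[OF qb]) (rule refl)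
  hence rb: "(of_rat b :: complex) = of_int B0 / of_int D0"
    using D1 D2 unfolding B0_def D0_def by (simp add: of_rat_divide field_simps)
  define f where "f c = D0 * int (n c) - (if c = 0 then A0 else 0) - e * B0 * chi p c" for c
  have fsum: "(\<Sum>c<p. of_int (f c) * z ^ c) = 0"
  proof -
    have "(\<Sum>c<p. of_int (f c) * z ^ c) =
          (\<Sum>c<p. of_int D0 * (of_nat (n c) * z ^ c) - (if c = 0 then of_int A0 else 0)
                   - of_int (e * B0) * (of_int (chi p c) * z ^ c))"
    proof (intro sum.cong refl)
      fix c
      show "of_int (f c) * z ^ c = of_int D0 * (of_nat (n c) * z ^ c) - (if c = 0 then of_int A0 else 0)
                   - of_int (e * B0) * (of_int (chi p c) * z ^ c)"
        unfolding f_def by (cases "c = 0") (simp_all add: algebra_simps)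
    qed
    also have "\<dots> = of_int D0 * (\<Sum>c<p. of_nat (n c) * z ^ c) - (\<Sum>c<p. (if c = 0 then of_int A0 else 0))
                   - of_int (e * B0) * G"
      unfolding G_def by (simp add: sum_subtractf sum_distrib_left)
    also have "(\<Sum>c<p. (if c = 0 then (of_int A0 :: complex) else 0)) = of_int A0"
      using p2 by (simp add: sum.delta)
    also have "(\<Sum>c<p. of_nat (n c) * z ^ c) = of_int A0 / of_int D0 + of_int B0 / of_int D0 * sq"
      using W ab ra rb by simp
    finally show ?thesis using D0 sqe by (simp add: field_simps)
  qed
  have fc: "\<forall>c<p. f c = f 0" by (rule cyc_LI_sum[OF prp z1 z_ne1 fsum])
  have chi0: "chi p 0 = 0" by (simp add: chi_zero_iff)
  have chi1: "chi p 1 = 1"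
  proof -
    have "chi p 1 \<noteq> 0" using p2 by (simp add: chi_zero_iff)
    moreover have "[chi p 1 = int 1 ^ ((p - 1) div 2)] (mod int p)" by (rule chi_euler) (use prp p5 in auto)
    hence "[chi p 1 = 1] (mod int p)" by simp
    ultimately show ?thesis using small_cong_eq[of p "chi p 1" 1] p5 chi_in by auto
  qed
  obtain g where g: "g < p" "chi p g = -1" using chi_nonres[OF prp] p5 by force
  have g0: "g \<noteq> 0"
  proof
    assume "g = 0" thus False using g chi0 by simp
  qed
  define n1 where "n1 = n 1"
  define ng where "ng = n g"
  have fc': "f c = f 0" if "c < p" for c using fc that by blast
  have f1: "D0 * int n1 - e * B0 = D0 * int (n 0) - A0"
    using fc'[of 1] p2 chi1 chi0 unfolding f_def n1_def by simp
  have fg: "D0 * int ng + e * B0 = D0 * int (n 0) - A0"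
    using fc'[OF g(1)] g g0 chi0 unfolding f_def ng_def by simp
  have h1: "D0 * (int n1 + int ng) = 2 * (D0 * int (n 0) - A0)" using f1 fg by (simp add: algebra_simps)
  have h2: "D0 * (int n1 - int ng) = 2 * e * B0" using f1 fg by (simp add: algebra_simps)
  have nc: "2 * int (n c) = (int n1 + int ng) + (int n1 - int ng) * chi p c" if c: "0 < c" "c < p" for c
  proof -
    have hc: "D0 * int (n c) = D0 * int (n 0) - A0 + e * B0 * chi p c"
      using fc'[OF c(2)] c chi0 unfolding f_def by simp
    have "D0 * (2 * int (n c)) = 2 * (D0 * int (n 0) - A0) + (2 * e * B0) * chi p c"
      using hc by (simp add: algebra_simps)
    also have "\<dots> = D0 * (int n1 + int ng) + (D0 * (int n1 - int ng)) * chi p c"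
      using h1 h2 by simp
    also have "\<dots> = D0 * ((int n1 + int ng) + (int n1 - int ng) * chi p c)"
      by (simp add: algebra_simps)
    finally show ?thesis using D0 by simp
  qed
  have sumeq: "int (p - 1) * (int n1 + int ng) = 2 * (int q - int (n 0))"
  proof -
    have "2 * int q = (\<Sum>c<p. 2 * int (n c))" unfolding qsum by (simp add: sum_distrib_left)
    also have "\<dots> = (\<Sum>c\<in>{0..<p}. 2 * int (n c))" by (simp add: lessThan_atLeast0)
    also have "\<dots> = 2 * int (n 0) + (\<Sum>c\<in>{Suc 0..<p}. 2 * int (n c))"
      using p2 by (subst sum.atLeast_Suc_lessThan) auto
    also have "(\<Sum>c\<in>{Suc 0..<p}. 2 * int (n c)) = (\<Sum>c\<in>{Suc 0..<p}. (int n1 + int ng) + (int n1 - int ng) * chi p c)"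
      by (intro sum.cong refl) (auto simp: nc)
    also have "\<dots> = int (p - 1) * (int n1 + int ng) + (int n1 - int ng) * (\<Sum>c\<in>{Suc 0..<p}. chi p c)"
      by (simp add: sum.distrib sum_distrib_left)
    also have "(\<Sum>c\<in>{Suc 0..<p}. chi p c) = 0"
    proof -
      have "(\<Sum>c<p. chi p c) = 0" by (rule sum_chi) (use p5 in auto)
      also have "(\<Sum>c<p. chi p c) = (\<Sum>c\<in>{0..<p}. chi p c)" by (simp add: lessThan_atLeast0)
      also have "\<dots> = chi p 0 + (\<Sum>c\<in>{Suc 0..<p}. chi p c)"
        using p2 by (subst sum.atLeast_Suc_lessThan) auto
      finally show ?thesis using chi0 by simp
    qed
    finally show ?thesis by simp
  qed
  define I0 where "I0 = 2 * int (n 0) - int n1 - int ng"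
  define J0 where "J0 = e * (int n1 - int ng)"
  have aI: "2 * A0 = D0 * I0" using f1 fg unfolding I0_def by (simp add: algebra_simps)
  have bJ: "2 * B0 = D0 * J0"
  proof -
    have "D0 * (int n1 - int ng) = 2 * e * B0" using f1 fg by (simp add: algebra_simps)
    hence "e * (D0 * (int n1 - int ng)) = 2 * (e * e) * B0" by (simp add: algebra_simps)
    thus ?thesis unfolding J0_def using ee by (simp add: algebra_simps)
  qed
  have ra2: "(of_rat a :: complex) = of_int I0 / 2"
  proof -
    have "(of_int (2 * A0) :: complex) = of_int (D0 * I0)" using aI by simp
    hence "2 * of_int A0 = of_int D0 * (of_int I0 :: complex)" by simp
    thus ?thesis unfolding ra using D0 by (simp add: field_simps)
  qed
  have rb2: "(of_rat b :: complex) = of_int J0 / 2"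
  proof -
    have "(of_int (2 * B0) :: complex) = of_int (D0 * J0)" using bJ by simp
    hence "2 * of_int B0 = of_int D0 * (of_int J0 :: complex)" by simp
    thus ?thesis unfolding rb using D0 by (simp add: field_simps)
  qed
  have W0: "weil_sum s u = (of_int I0 + of_int J0 * sq) / 2"
    using ab ra2 rb2 by (simp add: add_divide_distrib)
  have uniq: "I = I0 \<and> J = J0" if "weil_sum s u = (of_int I + of_int J * sq) / 2" for I J
  proof -
    have "(of_int I + of_int J * sq) / 2 = (of_int I0 + of_int J0 * sq) / 2" using that W0 by simp
    hence e1: "of_int I + of_int J * sq = of_int I0 + of_int J0 * sq"
      by (metis divide_cancel_right zero_neq_numeral)
    have "complex_of_real (real_of_int (I - I0) + real_of_int (J - J0) * sqrt (real p)) =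
          (of_int I + of_int J * sq) - (of_int I0 + of_int J0 * sq)"
      unfolding sq_def by (simp add: algebra_simps)
    also have "\<dots> = 0" using e1 by simp
    finally have "real_of_int (I - I0) + real_of_int (J - J0) * sqrt (real p) = 0"
      by (simp only: of_real_eq_0_iff)
    thus ?thesis using irr_sqrt_prime[OF prp] by fastforce
  qed
  have pq: "p dvd q" unfolding p_def q_def by (rule CHAR_dvd_CARD)
  show ?thesis
  proof (rule conjI)
    show "\<exists>!IJ :: int \<times> int. weil_sum s u = (of_int (fst IJ) + of_int (snd IJ) * complex_of_real (sqrt (real p))) / 2"
    proof (rule ex1I[of _ "(I0, J0)"])
      show "weil_sum s u = (of_int (fst (I0, J0)) + of_int (snd (I0, J0)) * complex_of_real (sqrt (real p))) / 2"
        using W0 unfolding sq_def by simp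
    next
      fix IJ :: "int \<times> int"
      assume "weil_sum s u = (of_int (fst IJ) + of_int (snd IJ) * complex_of_real (sqrt (real p))) / 2"
      hence "fst IJ = I0 \<and> snd IJ = J0" using uniq unfolding sq_def by blast
      thus "IJ = (I0, J0)" by (simp add: prod_eq_iff)
    qed
  next
    show "\<forall>I J :: int. weil_sum s u = (of_int I + of_int J * complex_of_real (sqrt (real p))) / 2 \<longrightarrow>
         [I = J] (mod 2) \<and> int p dvd I \<and>
         (\<not> degenerate TYPE('a) s \<longrightarrow>
            - real q < - 2 * (real q - 1) / (real p - 1)
            \<and> - 2 * (real q - 1) / (real p - 1) < real_of_int I
            \<and> real_of_int I < 2 * real q
            \<and> \<bar>real_of_int J\<bar> \<le> 2 * (real q - 1) / (real p - 1)
            \<and> 2 * (real q - 1) / (real p - 1) < real q)"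
    proof (intro allI impI)
      fix I J :: int
      assume "weil_sum s u = (of_int I + of_int J * complex_of_real (sqrt (real p))) / 2"
      hence IJ: "I = I0" "J = J0" using uniq unfolding sq_def by blast+
      have fa: "[I0 = J0] (mod 2) \<and> int p dvd I0 \<and>
         (n 0 < q \<longrightarrow>
            - real q < - 2 * (real q - 1) / (real p - 1)
            \<and> - 2 * (real q - 1) / (real p - 1) < real_of_int I0
            \<and> real_of_int I0 < 2 * real q
            \<and> \<bar>real_of_int J0\<bar> \<le> 2 * (real q - 1) / (real p - 1)
            \<and> 2 * (real q - 1) / (real p - 1) < real q)"
        unfolding I0_def J0_def by (rule final_arith[OF prp p5 pq n0 n0q sumeq e])
      show "[I = J] (mod 2) \<and> int p dvd I \<and>
         (\<not> degenerate TYPE('a) s \<longrightarrow>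
            - real q < - 2 * (real q - 1) / (real p - 1)
            \<and> - 2 * (real q - 1) / (real p - 1) < real_of_int I
            \<and> real_of_int I < 2 * real q
            \<and> \<bar>real_of_int J\<bar> \<le> 2 * (real q - 1) / (real p - 1)
            \<and> 2 * (real q - 1) / (real p - 1) < real q)"
        unfolding IJ using fa nondeg by blast
    qed
  qed
qed


end
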